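(* Let $\varepsilon>0$, $y_0\in(-1,0]$, and set $\varepsilon_1=\varepsilon/(1+y_0)^2$, $\varepsilon_2=\varepsilon/(1-y_0)^2$, $a=(1+y_0)/(1-y_0)\in(0,1]$. Let $c_1,c_2>0$. Let $\Omega=(\omega_1,\omega_2)^T$ be a classical solution on $[0,1]\times[t_0,\infty)$ of $$\partial_t\omega_i(x,t)=\varepsilon_i\,\partial_x^2\omega_i(x,t)-c_i\,\omega_i(x,t),\quad i=1,2,$$ with $$\omega_1(0,t)=\omega_2(0,t),\qquad \partial_x\omega_1(0,t)+a\,\partial_x\omega_2(0,t)=0,\qquad \omega_1(1,t)=\omega_2(1,t)=0 .$$ Then for all $t\ge t_0$, $$\|\Omega(\cdot,t)\|_{L^2}\le \Pi\, e^{-\gamma(t-t_0)}\,\|\Omega(\cdot,t_0)\|_{L^2},\qquad \Pi=a^{-3/2},\quad \gamma=\min\{a^3c_1,\,c_2\}+\frac{\varepsilon_2}{4},$$ where $\|\Omega(\cdot,t)\|_{L^2}^2=\int_0^1(\omega_1(x,t)^2+\omega_2(x,t)^2)\,dx$.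
   Context: This is the "folded target system": the boundary conditions at $x=0$ encode continuity of the unfolded state and of its spatial derivative at the folding point $y_0$. *)

theory Defs
  imports "HOL-Analysis.Analysis"
begin

definition classical_heat_sol ::
  "real \<Rightarrow> real \<Rightarrow> real \<Rightarrow> (real \<Rightarrow> real \<Rightarrow> real) \<Rightarrow> (real \<Rightarrow> real \<Rightarrow> real)
   \<Rightarrow> (real \<Rightarrow> real \<Rightarrow> real) \<Rightarrow> (real \<Rightarrow> real \<Rightarrow> real) \<Rightarrow> bool" where
  "classical_heat_sol eps c t0 w wx wxx wt \<longleftrightarrow>
     continuous_on ({0..1} \<times> {t0..}) (\<lambda>(x,t). w x t) \<and>
     continuous_on ({0..1} \<times> {t0..}) (\<lambda>(x,t). wx x t) \<and>
     continuous_on ({0..1} \<times> {t0..}) (\<lambda>(x,t). wxx x t) \<and>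
     continuous_on ({0..1} \<times> {t0..}) (\<lambda>(x,t). wt x t) \<and>
     (\<forall>x\<in>{0..1}. \<forall>t\<in>{t0..}.
        ((\<lambda>y. w y t) has_real_derivative wx x t) (at x within {0..1}) \<and>
        ((\<lambda>y. wx y t) has_real_derivative wxx x t) (at x within {0..1}) \<and>
        ((\<lambda>s. w x s) has_real_derivative wt x t) (at t within {t0..}) \<and>
        wt x t = eps * wxx x t - c * w x t)"

definition L2norm2 :: "(real \<Rightarrow> real \<Rightarrow> real) \<Rightarrow> (real \<Rightarrow> real \<Rightarrow> real) \<Rightarrow> real \<Rightarrow> real" where
  "L2norm2 w1 w2 t = sqrt (integral {0..1} (\<lambda>x. (w1 x t)\<^sup>2 + (w2 x t)\<^sup>2))"

end

theory Submission imports Defs begin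

lemma cont_swap:
  assumes "continuous_on (A \<times> B) (\<lambda>(x,t). f x t)"
  shows "continuous_on (B \<times> A) (\<lambda>(t,x). f x t :: real)"
proof -
  have "continuous_on (B \<times> A) ((\<lambda>(x,t). f x t) \<circ> prod.swap)"
    by (rule continuous_on_compose[OF continuous_on_swap]) (simp add: product_swap assms)
  then show ?thesis by (simp add: o_def case_prod_unfold)
qed

lemma cont_slice:
  assumes "continuous_on (A \<times> B) (\<lambda>(x,t). f x t)" "t \<in> B"
  shows "continuous_on A (\<lambda>x. f x t :: real)"
proof -
  have "continuous_on A ((\<lambda>(x,t). f x t) \<circ> (\<lambda>x. (x,t)))"
    by (rule continuous_on_compose) (auto intro!: continuous_intros continuous_on_subset[OF assms(1)] simp: assms(2))
  then show ?thesis by (simp add: o_def)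
qed

lemma pw:
  fixes e1 e2 x g c u ux uxx :: real
  assumes "e2 \<le> e1" "0 < e2" "0 \<le> x" "x \<le> 1" "g \<le> c + e2/4"
  shows "2*u*(e1*uxx - c*u) + 2*g*u\<^sup>2 \<le> 2*e1*(ux\<^sup>2 + u*uxx) + e2*(u\<^sup>2 + 2*x*u*ux)"
proof -
  have h1: "0 \<le> (e2/2)*(u+2*x*ux)\<^sup>2" using assms by simp
  have h2: "0 \<le> e2*ux\<^sup>2*(1-x\<^sup>2)" using assms by (simp add: power_le_one)
  have h3: "0 \<le> (e1-e2)*ux\<^sup>2" using assms by simp
  have h4: "0 \<le> (c + e2/4 - g)*u\<^sup>2" using assms by simp
  have "2*e1*(ux\<^sup>2 + u*uxx) + e2*(u\<^sup>2 + 2*x*u*ux) - (2*u*(e1*uxx - c*u) + 2*g*u\<^sup>2)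
     = (e2/2)*(u+2*x*ux)\<^sup>2 + 2*(e2*ux\<^sup>2*(1-x\<^sup>2)) + 2*((e1-e2)*ux\<^sup>2) + 2*((c + e2/4 - g)*u\<^sup>2)"
    by (simp add: algebra_simps power2_eq_square)
  then show ?thesis using h1 h2 h3 h4 by linarith
qed

lemma ftc1:
  fixes w wx wxx :: "real \<Rightarrow> real"
  assumes "\<And>x. x \<in> {0..1} \<Longrightarrow> (w has_real_derivative wx x) (at x within {0..1})"
    "\<And>x. x \<in> {0..1} \<Longrightarrow> (wx has_real_derivative wxx x) (at x within {0..1})"
  shows "((\<lambda>x. (wx x)\<^sup>2 + w x * wxx x) has_integral (w 1 * wx 1 - w 0 * wx 0)) {0..1}"
proof (rule fundamental_theorem_of_calculus)
  fix x :: real assume x: "x \<in> {0..1}"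
  have "((\<lambda>x. w x * wx x) has_real_derivative (wx x * wx x + w x * wxx x)) (at x within {0..1})"
    by (rule DERIV_cong[OF DERIV_mult[OF assms(1)[OF x] assms(2)[OF x]]]) (simp add: algebra_simps)
  then show "((\<lambda>x. w x * wx x) has_vector_derivative (wx x)\<^sup>2 + w x * wxx x) (at x within {0..1})"
    by (simp add: has_real_derivative_iff_has_vector_derivative power2_eq_square)
qed simp

lemma ftc2:
  fixes w wx :: "real \<Rightarrow> real"
  assumes "\<And>x. x \<in> {0..1} \<Longrightarrow> (w has_real_derivative wx x) (at x within {0..1})"
  shows "((\<lambda>x. (w x)\<^sup>2 + 2 * x * w x * wx x) has_integral ((w 1)\<^sup>2)) {0..1}"
proof -
  have "((\<lambda>x. (w x)\<^sup>2 + 2 * x * w x * wx x) has_integral (1 * (w 1)\<^sup>2 - 0 * (w 0)\<^sup>2)) {0..1}"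
  proof (rule fundamental_theorem_of_calculus)
    fix x :: real assume x: "x \<in> {0..1}"
    have "((\<lambda>x. x * (w x * w x)) has_real_derivative (1 * (w x * w x) + x * (wx x * w x + w x * wx x))) (at x within {0..1})"
      by (rule DERIV_cong[OF DERIV_mult[OF DERIV_ident DERIV_mult[OF assms[OF x] assms[OF x]]]]) (simp add: algebra_simps)
    then show "((\<lambda>x. x * (w x)\<^sup>2) has_vector_derivative (w x)\<^sup>2 + 2 * x * w x * wx x) (at x within {0..1})"
      by (simp add: has_real_derivative_iff_has_vector_derivative power2_eq_square algebra_simps)
  qed simp
  then show ?thesis by simp
qed


lemma hmono_gen:
  fixes V Vd :: "real \<Rightarrow> real"
  assumes Vder: "\<And>t. t \<ge> t0 \<Longrightarrow> (V has_real_derivative Vd t) (at t within {t0..})"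
    and Dle: "\<And>t. t \<ge> t0 \<Longrightarrow> Vd t + 2 * g * V t \<le> 0"
    and t: "t \<ge> t0"
  shows "exp (2*g*(t-t0)) * V t \<le> V t0"
proof -
  define h where "h = (\<lambda>s. exp (2*g*(s-t0)) * V s)"
  have Vcont: "continuous_on {t0..} V"
    using Vder by (intro DERIV_continuous_on) auto
  have "h t \<le> h t0"
  proof (rule DERIV_nonpos_imp_decreasing_open[OF t])
    fix s assume s: "t0 < s" "s < t"
    have "(V has_real_derivative Vd s) (at s within {t0<..})"
      by (rule DERIV_subset[OF Vder]) (use s in auto)
    then have dV: "(V has_real_derivative Vd s) (at s)"
      using at_within_open[of s "{t0<..}"] s(1) by simp
    have dE: "((\<lambda>s. exp (2*g*(s-t0))) has_real_derivative exp (2*g*(s-t0)) * (2*g)) (at s)"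
      by (rule DERIV_cong[OF DERIV_chain2[OF DERIV_exp DERIV_cmult[OF DERIV_diff[OF DERIV_ident DERIV_const]]]]) simp
    have "(h has_real_derivative exp (2*g*(s-t0)) * (2*g) * V s + Vd s * exp (2*g*(s-t0))) (at s)"
      unfolding h_def by (rule DERIV_mult[OF dE dV])
    moreover have "exp (2*g*(s-t0)) * (2*g) * V s + Vd s * exp (2*g*(s-t0)) = exp (2*g*(s-t0)) * (Vd s + 2*g*V s)"
      by (simp add: algebra_simps)
    moreover have "exp (2*g*(s-t0)) * (Vd s + 2*g*V s) \<le> 0"
      using Dle[of s] s(1) by (intro mult_nonneg_nonpos) auto
    ultimately show "\<exists>y. (h has_real_derivative y) (at s) \<and> y \<le> 0" by metis
  next
    show "continuous_on {t0..t} h" unfolding h_def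
      by (intro continuous_intros continuous_on_subset[OF Vcont]) auto
  qed
  then show ?thesis by (simp add: h_def)
qed

lemma final_gen:
  fixes a g t t0 Nt Vt Nt0 Vt0 :: real
  assumes a_pos: "0 < a" and a_le: "a \<le> 1" and NV: "Nt \<le> Vt" and VN: "Vt0 \<le> Nt0 / a"
    and Nnn: "0 \<le> Nt0" and hm: "exp (2*g*(t-t0)) * Vt \<le> Vt0"
  shows "sqrt Nt \<le> a powr (-3/2) * exp (- g * (t - t0)) * sqrt Nt0"
proof -
  have ee: "exp (- (2*g*(t-t0))) * exp (2*g*(t-t0)) = 1" by (simp add: exp_minus)
  have "Vt = exp (- (2*g*(t-t0))) * (exp (2*g*(t-t0)) * Vt)" using ee by simp
  also have "\<dots> \<le> exp (- (2*g*(t-t0))) * Vt0"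
    using hm by (intro mult_left_mono) auto
  also have "\<dots> \<le> exp (- (2*g*(t-t0))) * (Nt0 / a)"
    using VN by (intro mult_left_mono) auto
  also have "exp (- (2*g*(t-t0))) = exp (- g * (t-t0)) ^ 2"
    by (simp add: power2_eq_square exp_add[symmetric])
  finally have "Nt \<le> exp (- g * (t-t0)) ^ 2 * (Nt0 / a)"
    using NV by linarith
  then have "sqrt Nt \<le> sqrt (exp (- g * (t-t0)) ^ 2 * (Nt0 / a))"
    by (rule real_sqrt_le_mono)
  also have "\<dots> = exp (- g * (t-t0)) * sqrt Nt0 * (1 / sqrt a)"
    by (simp add: real_sqrt_mult real_sqrt_divide)
  also have "\<dots> \<le> exp (- g * (t-t0)) * sqrt Nt0 * a powr (-3/2)"
  proof (rule mult_left_mono)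
    have "1 / sqrt a = a powr (-1/2)"
      using a_pos by (simp add: powr_minus_divide powr_half_sqrt[symmetric])
    also have "\<dots> \<le> a powr (-1/2) * (1/a)"
      using a_pos a_le by (intro mult_le_cancel_left1[THEN iffD2]) auto
    also have "\<dots> = a powr (-3/2)"
    proof -
      have "a powr (-3/2) = a powr (-1/2 + -1)" by simp
      also have "\<dots> = a powr (-1/2) * a powr (-1)" by (rule powr_add)
      also have "a powr (-1) = 1/a" using a_pos by (simp add: powr_minus_divide)
      finally show ?thesis by simp
    qed
    finally show "1 / sqrt a \<le> a powr (-3/2)" .
  qed (use Nnn in auto)
  finally show ?thesis by (simp add: mult_ac)
qed

theorem lemma1:
  fixes eps y0 c1 c2 t0 :: real
    and w1 w1x w1xx w1t w2 w2x w2xx w2t :: "real \<Rightarrow> real \<Rightarrow> real"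
  assumes "eps > 0" and "-1 < y0" and "y0 \<le> 0" and "c1 > 0" and "c2 > 0"
    and "classical_heat_sol (eps / (1 + y0)\<^sup>2) c1 t0 w1 w1x w1xx w1t"
    and "classical_heat_sol (eps / (1 - y0)\<^sup>2) c2 t0 w2 w2x w2xx w2t"
    and "\<forall>t\<ge>t0. w1 0 t = w2 0 t"
    and "\<forall>t\<ge>t0. w1x 0 t + ((1 + y0) / (1 - y0)) * w2x 0 t = 0"
    and "\<forall>t\<ge>t0. w1 1 t = 0 \<and> w2 1 t = 0"
  shows "\<forall>t\<ge>t0. L2norm2 w1 w2 t \<le>
           ((1 + y0) / (1 - y0)) powr (-3/2)
           * exp (- (min (((1 + y0) / (1 - y0))^3 * c1) c2 + (eps / (1 - y0)\<^sup>2) / 4) * (t - t0))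
           * L2norm2 w1 w2 t0"
proof -
  define a where "a = (1+y0)/(1-y0)"
  define e1 where "e1 = eps/(1+y0)\<^sup>2"
  define e2 where "e2 = eps/(1-y0)\<^sup>2"
  define g where "g = min (a^3*c1) c2 + e2/4"
  have p1: "0 < 1 + y0" "0 < 1 - y0" using assms by auto
  have a_pos: "0 < a" using p1 by (simp add: a_def)
  have a_le: "a \<le> 1" using assms p1 by (simp add: a_def)
  have e2pos: "0 < e2" using assms p1 by (simp add: e2_def)
  have sq: "(1+y0)\<^sup>2 \<le> (1-y0)\<^sup>2" using assms p1 by (intro power_mono) auto
  have e21: "e2 \<le> e1" unfolding e1_def e2_def
    using assms p1 sq by (intro divide_left_mono) auto
  have e2a: "e2 / a = e1 * a"
  proof -
    have n: "1 - y0 \<noteq> 0" "1 + y0 \<noteq> 0" using p1 by auto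
    have "e2 / a = eps / ((1-y0)*(1+y0))" unfolding a_def e2_def using n
      by (simp add: power2_eq_square divide_simps)
    moreover have "e1 * a = eps / ((1-y0)*(1+y0))" unfolding a_def e1_def using n
      by (simp add: power2_eq_square divide_simps)
    ultimately show ?thesis by simp
  qed
  have a3: "a^3 \<le> 1" using a_pos a_le by (simp add: power_le_one)
  have "a^3*c1 \<le> 1*c1" using a3 assms(4) by (intro mult_right_mono) auto
  then have g1: "g \<le> c1 + e2/4" unfolding g_def by linarith
  have g2: "g \<le> c2 + e2/4" unfolding g_def by simp
  have H1: "classical_heat_sol e1 c1 t0 w1 w1x w1xx w1t" using assms(6) by (simp add: e1_def)
  have H2: "classical_heat_sol e2 c2 t0 w2 w2x w2xx w2t" using assms(7) by (simp add: e2_def)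
  note H1' = H1[unfolded classical_heat_sol_def] and H2' = H2[unfolded classical_heat_sol_def]
  have c1w: "continuous_on {0..1} (\<lambda>x. w1 x t)" "continuous_on {0..1} (\<lambda>x. w1x x t)"
      "continuous_on {0..1} (\<lambda>x. w1xx x t)" "continuous_on {0..1} (\<lambda>x. w1t x t)"
      "continuous_on {0..1} (\<lambda>x. w2 x t)" "continuous_on {0..1} (\<lambda>x. w2x x t)"
      "continuous_on {0..1} (\<lambda>x. w2xx x t)" "continuous_on {0..1} (\<lambda>x. w2t x t)"
    if "t \<ge> t0" for t
    using H1' H2' that by (auto intro: cont_slice)
  have s1: "continuous_on ({t0..} \<times> {0..1}) (\<lambda>p. w1 (snd p) (fst p))"
       "continuous_on ({t0..} \<times> {0..1}) (\<lambda>p. w1t (snd p) (fst p))"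
       "continuous_on ({t0..} \<times> {0..1}) (\<lambda>p. w2 (snd p) (fst p))"
       "continuous_on ({t0..} \<times> {0..1}) (\<lambda>p. w2t (snd p) (fst p))"
    using cont_swap[of "{0..1}" "{t0..}" w1] cont_swap[of "{0..1}" "{t0..}" w1t]
      cont_swap[of "{0..1}" "{t0..}" w2] cont_swap[of "{0..1}" "{t0..}" w2t] H1' H2'
    by (simp_all add: case_prod_unfold)
  define fV where "fV = (\<lambda>s x. (w1 x s)\<^sup>2 + (w2 x s)\<^sup>2 / a)"
  define fD where "fD = (\<lambda>s x. 2 * w1 x s * w1t x s + 2 * w2 x s * w2t x s / a)"
  define V where "V = (\<lambda>s. integral {0..1} (fV s))"
  define Vd where "Vd = (\<lambda>s. integral {0..1} (fD s))"
  have intV: "(fV s has_integral V s) {0..1}" if "s \<ge> t0" for s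
    unfolding V_def fV_def using c1w[OF that] a_pos
    by (intro integrable_integral integrable_continuous_interval continuous_intros) auto
  have intD: "(fD s has_integral Vd s) {0..1}" if "s \<ge> t0" for s
    unfolding Vd_def fD_def using c1w[OF that] a_pos
    by (intro integrable_integral integrable_continuous_interval continuous_intros) auto
  have cb: "cbox (0::real) 1 = {0..1}" by simp
  have Vder: "(V has_real_derivative Vd t) (at t within {t0..})" if "t \<ge> t0" for t
  proof -
    have "((\<lambda>s. integral (cbox 0 1) (fV s)) has_field_derivative integral (cbox 0 1) (fD t)) (at t within {t0..})"
    proof (rule leibniz_rule_field_derivative[where fx=fD])
      fix s x :: real assume sx: "s \<in> {t0..}" "x \<in> cbox 0 1"
      then have d1: "((\<lambda>s. w1 x s) has_real_derivative w1t x s) (at s within {t0..})"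
        and d2: "((\<lambda>s. w2 x s) has_real_derivative w2t x s) (at s within {t0..})"
        using H1' H2' sx(1) sx(2)[unfolded cb] by blast+
      show "((\<lambda>s. fV s x) has_field_derivative fD s x) (at s within {t0..})"
        unfolding fV_def fD_def power2_eq_square
        by (rule DERIV_cong[OF DERIV_add[OF DERIV_mult[OF d1 d1] DERIV_cdivide[OF DERIV_mult[OF d2 d2]]]])
           (simp add: algebra_simps add_divide_distrib)
    next
      fix s :: real assume "s \<in> {t0..}"
      then show "fV s integrable_on cbox 0 1" using intV by (auto simp: cb)
    next
      have "continuous_on ({t0..} \<times> {0..1}) (\<lambda>p. 2 * w1 (snd p) (fst p) * w1t (snd p) (fst p)
          + 2 * w2 (snd p) (fst p) * w2t (snd p) (fst p) / a)"
        using s1 a_pos by (intro continuous_intros) auto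
      then show "continuous_on ({t0..} \<times> cbox 0 1) (\<lambda>(s, x). fD s x)"
        by (simp add: fD_def case_prod_unfold)
    qed (use that in auto)
    then show ?thesis by (simp add: V_def Vd_def)
  qed
  have Dle: "Vd t + 2 * g * V t \<le> 0" if t: "t \<ge> t0" for t
  proof -
    define Q where "Q = (\<lambda>x. 2*e1*((w1x x t)\<^sup>2 + w1 x t * w1xx x t) + (2*e2/a)*((w2x x t)\<^sup>2 + w2 x t * w2xx x t)
        + e2*((w1 x t)\<^sup>2 + 2 * x * w1 x t * w1x x t) + (e2/a)*((w2 x t)\<^sup>2 + 2 * x * w2 x t * w2x x t))"
    have d1: "\<And>x. x \<in> {0..1} \<Longrightarrow> ((\<lambda>y. w1 y t) has_real_derivative w1x x t) (at x within {0..1})"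
         "\<And>x. x \<in> {0..1} \<Longrightarrow> ((\<lambda>y. w1x y t) has_real_derivative w1xx x t) (at x within {0..1})"
         "\<And>x. x \<in> {0..1} \<Longrightarrow> ((\<lambda>y. w2 y t) has_real_derivative w2x x t) (at x within {0..1})"
         "\<And>x. x \<in> {0..1} \<Longrightarrow> ((\<lambda>y. w2x y t) has_real_derivative w2xx x t) (at x within {0..1})"
      using H1' H2' t by auto
    have "(Q has_integral (2*e1*(w1 1 t * w1x 1 t - w1 0 t * w1x 0 t) + (2*e2/a)*(w2 1 t * w2x 1 t - w2 0 t * w2x 0 t)
        + e2*(w1 1 t)\<^sup>2 + (e2/a)*(w2 1 t)\<^sup>2)) {0..1}"
      unfolding Q_def
      by (intro has_integral_add has_integral_mult_right ftc1 ftc2 d1)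
    moreover have "2*e1*(w1 1 t * w1x 1 t - w1 0 t * w1x 0 t) + (2*e2/a)*(w2 1 t * w2x 1 t - w2 0 t * w2x 0 t)
        + e2*(w1 1 t)\<^sup>2 + (e2/a)*(w2 1 t)\<^sup>2 = 0"
    proof -
      have b: "w1 1 t = 0" "w2 1 t = 0" "w1 0 t = w2 0 t" and bx: "w1x 0 t + a * w2x 0 t = 0"
        using assms(8-10) t by (auto simp: a_def)
      have ea: "2*e2/a = 2*(e1*a)" using e2a by simp
      have "2*e1*(w1 1 t * w1x 1 t - w1 0 t * w1x 0 t) + (2*e2/a)*(w2 1 t * w2x 1 t - w2 0 t * w2x 0 t)
        + e2*(w1 1 t)\<^sup>2 + (e2/a)*(w2 1 t)\<^sup>2 = -(2*e1*w2 0 t*(w1x 0 t + a * w2x 0 t))"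
        unfolding b ea by (simp add: algebra_simps)
      then show ?thesis unfolding bx by simp
    qed
    ultimately have iQ: "(Q has_integral 0) {0..1}" by simp
    have iE: "((\<lambda>x. fD t x + 2*g*fV t x) has_integral (Vd t + 2*g*V t)) {0..1}"
      by (intro has_integral_add has_integral_mult_right intD intV t)
    show ?thesis
    proof (rule has_integral_le[OF iE iQ])
      fix x :: real assume x: "x \<in> {0..1}"
      have eq1: "w1t x t = e1 * w1xx x t - c1 * w1 x t" "w2t x t = e2 * w2xx x t - c2 * w2 x t"
        using H1' H2' t x by auto
      have i1: "2*w1 x t*(e1*w1xx x t - c1*w1 x t) + 2*g*(w1 x t)\<^sup>2 \<le> 2*e1*((w1x x t)\<^sup>2 + w1 x t*w1xx x t) + e2*((w1 x t)\<^sup>2 + 2*x*w1 x t*w1x x t)"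
        using x e21 e2pos g1 by (intro pw) auto
      have i2: "2*w2 x t*(e2*w2xx x t - c2*w2 x t) + 2*g*(w2 x t)\<^sup>2 \<le> 2*e2*((w2x x t)\<^sup>2 + w2 x t*w2xx x t) + e2*((w2 x t)\<^sup>2 + 2*x*w2 x t*w2x x t)"
        using x e21 e2pos g2 by (intro pw) auto
      have i2': "(2*w2 x t*(e2*w2xx x t - c2*w2 x t) + 2*g*(w2 x t)\<^sup>2)/a \<le> (2*e2*((w2x x t)\<^sup>2 + w2 x t*w2xx x t) + e2*((w2 x t)\<^sup>2 + 2*x*w2 x t*w2x x t))/a"
        using i2 a_pos by (simp add: divide_right_mono)
      have E: "fD t x + 2*g*fV t x = (2*w1 x t*(e1*w1xx x t - c1*w1 x t) + 2*g*(w1 x t)\<^sup>2)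
          + (2*w2 x t*(e2*w2xx x t - c2*w2 x t) + 2*g*(w2 x t)\<^sup>2)/a"
        unfolding fD_def fV_def eq1 using a_pos by (simp add: field_simps)
      have Qe: "Q x = (2*e1*((w1x x t)\<^sup>2 + w1 x t*w1xx x t) + e2*((w1 x t)\<^sup>2 + 2*x*w1 x t*w1x x t))
          + (2*e2*((w2x x t)\<^sup>2 + w2 x t*w2xx x t) + e2*((w2 x t)\<^sup>2 + 2*x*w2 x t*w2x x t))/a"
        unfolding Q_def using a_pos by (simp add: field_simps)
      show "fD t x + 2*g*fV t x \<le> Q x" unfolding E Qe using i1 i2' by linarith
    qed
  qed
  define N where "N = (\<lambda>s. integral {0..1} (\<lambda>x. (w1 x s)\<^sup>2 + (w2 x s)\<^sup>2))"
  have intN: "((\<lambda>x. (w1 x s)\<^sup>2 + (w2 x s)\<^sup>2) has_integral N s) {0..1}" if "s \<ge> t0" for s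
    unfolding N_def using c1w[OF that]
    by (intro integrable_integral integrable_continuous_interval continuous_intros) auto
  have goal: "sqrt (N t) \<le> a powr (-3/2) * exp (- g * (t - t0)) * sqrt (N t0)" if t: "t \<ge> t0" for t
  proof (rule final_gen[OF a_pos a_le])
    show "N t \<le> V t"
    proof (rule has_integral_le[OF intN[OF t] intV[OF t]])
      fix x :: real
      have "(w2 x t)\<^sup>2 * 1 \<le> (w2 x t)\<^sup>2 * (1/a)" using a_pos a_le
        by (intro mult_left_mono) auto
      then show "(w1 x t)\<^sup>2 + (w2 x t)\<^sup>2 \<le> fV t x" by (simp add: fV_def)
    qed
    show "V t0 \<le> N t0 / a"
    proof (rule has_integral_le[OF intV has_integral_divide[OF intN]])
      fix x :: real
      have "(w1 x t0)\<^sup>2 * 1 \<le> (w1 x t0)\<^sup>2 * (1/a)" using a_pos a_le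
        by (intro mult_left_mono) auto
      then show "fV t0 x \<le> ((w1 x t0)\<^sup>2 + (w2 x t0)\<^sup>2) / a" by (simp add: fV_def add_divide_distrib)
    qed auto
    show "0 \<le> N t0" by (rule has_integral_nonneg[OF intN]) auto
    show "exp (2*g*(t-t0)) * V t \<le> V t0"
      by (rule hmono_gen[OF Vder Dle t])
  qed
  show ?thesis
  proof (intro allI impI)
    fix t assume "t \<ge> t0"
    from goal[OF this] show "L2norm2 w1 w2 t \<le> ((1 + y0) / (1 - y0)) powr (-3/2)
           * exp (- (min (((1 + y0) / (1 - y0))^3 * c1) c2 + (eps / (1 - y0)\<^sup>2) / 4) * (t - t0))
           * L2norm2 w1 w2 t0"
      by (simp only: L2norm2_def N_def a_def g_def e2_def)
  qed
qed

end
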